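(* Let $a,b,c>0$. Let $B(a,b,c)$ denote the semi-infinite real symmetric matrix indexed by $j,k\in\mathbb{Z}_{+}=\{0,1,2,\ldots\}$ with entries \[ B(a,b,c)_{j,k}=\frac{\Gamma(j+k+a)}{\Gamma(j+k+b+c)}\sqrt{\frac{\Gamma(j+b)\Gamma(j+c)\Gamma(k+b)\Gamma(k+c)}{\Gamma(j+a)\,j!\,\Gamma(k+a)\,k!}}. \] Let $A$ be the semi-infinite matrix indexed by $\mathbb{Z}_{+}$ with entries $A_{2j,2k}=B(a,b,c)_{j,k}$, $A_{2j+1,2k+1}=B(a+1,b+1,c)_{j,k}$ for $j,k\in\mathbb{Z}_{+}$, and $A_{j,k}=0$ whenever $j,k$ have different parity. Let $D$ be the semi-infinite matrix with $D_{j,j+1}=-D_{j+1,j}=d(j)$ for $j\in\mathbb{Z}_{+}$ and $D_{j,k}=0$ otherwise, where \[ d(2j)=\sqrt{(j+a)(j+b)},\qquad d(2j+1)=\sqrt{(j+1)(j+c)},\qquad j\in\mathbb{Z}_{+}. \] Then $A$ and $D$ commute, i.e. $AD=DA$ (the matrix products being well defined entrywise since $D$ has finitely many nonzero entries in each row and column).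
   Context: $\Gamma$ is Euler's Gamma function. $A$ corresponds to the direct sum $B(a,b,c)\oplus B(a+1,b+1,c)$ with respect to the decomposition $\ell^2(\mathbb{Z}_+)=\ell^2(2\mathbb{Z}_+)\oplus\ell^2(2\mathbb{Z}_++1)$. *)

theory Defs
  imports "HOL-Analysis.Analysis"
begin

type_synonym smatrix = "nat \<Rightarrow> nat \<Rightarrow> real"

definition Bmat :: "real \<Rightarrow> real \<Rightarrow> real \<Rightarrow> smatrix" where
  "Bmat a b c j k =
     Gamma (real (j + k) + a) / Gamma (real (j + k) + b + c) *
     sqrt ((Gamma (real j + b) * Gamma (real j + c) * Gamma (real k + b) * Gamma (real k + c)) /
           (Gamma (real j + a) * fact j * Gamma (real k + a) * fact k))"

definition Amat :: "real \<Rightarrow> real \<Rightarrow> real \<Rightarrow> smatrix" where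
  "Amat a b c j k =
     (if even j \<and> even k then Bmat a b c (j div 2) (k div 2)
      else if odd j \<and> odd k then Bmat (a + 1) (b + 1) c (j div 2) (k div 2)
      else 0)"

definition dseq :: "real \<Rightarrow> real \<Rightarrow> real \<Rightarrow> nat \<Rightarrow> real" where
  "dseq a b c n =
     (if even n then sqrt ((real (n div 2) + a) * (real (n div 2) + b))
      else sqrt ((real (n div 2) + 1) * (real (n div 2) + c)))"

definition Dmat :: "real \<Rightarrow> real \<Rightarrow> real \<Rightarrow> smatrix" where
  "Dmat a b c j k =
     (if k = j + 1 then dseq a b c j
      else if j = k + 1 then - dseq a b c k
      else 0)"

text \<open>Entrywise matrix product (the series has finitely many nonzero terms
  whenever one factor is row/column finite).\<close>
definition smat_mult :: "smatrix \<Rightarrow> smatrix \<Rightarrow> smatrix" where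
  "smat_mult X Y j k = (\<Sum>m. X j m * Y m k)"

end

theory Submission imports Defs begin
lemma G1: "x > 0 \<Longrightarrow> Gamma (x+1) = x * Gamma (x::real)"
  by (rule Gamma_plus1) (auto simp: nonpos_Ints_def)

definition w :: "real \<Rightarrow> real \<Rightarrow> real \<Rightarrow> nat \<Rightarrow> real" where
  "w a b c j = sqrt (Gamma (real j + b) * Gamma (real j + c) / (Gamma (real j + a) * fact j))"

lemma Bw: "Bmat a b c j k = Gamma (real (j + k) + a) / Gamma (real (j + k) + b + c) * (w a b c j * w a b c k)"
proof -
  have "(Gamma (real j + b) * Gamma (real j + c) * Gamma (real k + b) * Gamma (real k + c)) /
           (Gamma (real j + a) * fact j * Gamma (real k + a) * fact k) =
        (Gamma (real j + b) * Gamma (real j + c) / (Gamma (real j + a) * fact j)) *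
        (Gamma (real k + b) * Gamma (real k + c) / (Gamma (real k + a) * fact k))"
    by (simp add: ac_simps)
  note eq = this
  show ?thesis unfolding Bmat_def w_def by (simp only: eq real_sqrt_mult)
qed

lemma w_Suc:
  assumes "a > 0" "b > 0" "c > 0"
  shows "w a b c (Suc j) = w a b c j * sqrt ((real j + b) * (real j + c) / ((real j + a) * (real j + 1)))"
proof -
  have e: "real (Suc j) + x = (real j + x) + 1" for x by simp
  have pa: "Gamma (real j + a) > 0" "Gamma (real j + b) > 0" "Gamma (real j + c) > 0"
    using assms by auto
  have "Gamma (real (Suc j) + b) * Gamma (real (Suc j) + c) / (Gamma (real (Suc j) + a) * fact (Suc j))
     = (Gamma (real j + b) * Gamma (real j + c) / (Gamma (real j + a) * fact j)) *
       ((real j + b) * (real j + c) / ((real j + a) * (real j + 1)))"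
    unfolding e using assms pa
    apply (simp only: G1 fact_Suc)
    apply (simp add: mult_ac)
    done
  note eq = this
  show ?thesis unfolding w_def by (simp only: eq real_sqrt_mult)
qed

lemma w_shift:
  assumes "a > 0" "b > 0" "c > 0"
  shows "w (a+1) (b+1) c j = w a b c j * sqrt ((real j + b) / (real j + a))"
proof -
  have pa: "Gamma (real j + a) > 0" "Gamma (real j + b) > 0" "Gamma (real j + c) > 0"
    using assms by auto
  have e: "real j + (x + 1) = (real j + x) + 1" for x by simp
  have "Gamma (real j + (b+1)) * Gamma (real j + c) / (Gamma (real j + (a+1)) * fact j)
     = (Gamma (real j + b) * Gamma (real j + c) / (Gamma (real j + a) * fact j)) *
       ((real j + b) / (real j + a))"
    unfolding e using assms pa
    apply (simp only: G1)
    apply (simp add: mult_ac)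
    done
  note eq = this
  show ?thesis unfolding w_def by (simp only: eq real_sqrt_mult)
qed

lemma sq1: "x > 0 \<Longrightarrow> sqrt (x * y) = x * sqrt (y / (x::real))"
proof -
  assume x: "x > 0"
  have e: "x * y = x^2 * (y / x)" using x by (simp add: power2_eq_square field_simps)
  have "sqrt (x * y) = sqrt (x^2 * (y / x))" by (simp only: e)
  also have "\<dots> = sqrt (x^2) * sqrt (y / x)" by (rule real_sqrt_mult)
  finally show ?thesis using x by simp
qed

lemma sq2: "x \<ge> 0 \<Longrightarrow> sqrt (x^2 * y) = x * sqrt (y::real)"
  by (simp add: real_sqrt_mult)

lemma alg4: "y \<noteq> 0 \<Longrightarrow> z \<noteq> 0 \<Longrightarrow> x * u / (y * z) * (z * u) = u^2 * (x / (y::real))"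
  by (simp add: power2_eq_square field_simps)

lemma alg5: "y \<noteq> 0 \<Longrightarrow> z \<noteq> 0 \<Longrightarrow> z * u * (x / y) = z^2 * (x * u / (y * (z::real)))"
  by (simp add: power2_eq_square field_simps)

lemma key:
  assumes a: "a > 0" and b: "b > 0" and c: "c > 0"
  shows "Bmat a b c p q * sqrt ((real q + a) * (real q + b)) - Bmat a b c p (Suc q) * sqrt ((real q + 1) * (real q + c))
   = sqrt ((real p + a) * (real p + b)) * Bmat (a+1) (b+1) c p q
     - (if p = 0 then 0 else sqrt ((real (p-1) + 1) * (real (p-1) + c)) * Bmat (a+1) (b+1) c (p-1) q)"
proof -
  define n where "n = real (p + q)"
  define R where "R = Gamma (n + a) / Gamma (n + b + c)"
  define s where "s = sqrt ((real q + b) / (real q + a))"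
  define sp where "sp = sqrt ((real p + b) / (real p + a))"
  define W where "W = w a b c p * w a b c q"
  have n0: "n \<ge> 0" by (simp add: n_def)
  have Gna: "Gamma (n + a) > 0" "Gamma (n + b + c) > 0" using a b c n0 by auto
  have h1: "Bmat a b c p q = R * W" by (simp add: Bw R_def W_def n_def)
  have h2: "Bmat a b c p (Suc q) = R * (n + a) / (n + b + c) * (W * sqrt ((real q + b) * (real q + c) / ((real q + a) * (real q + 1))))"
  proof -
    have e1: "real (p + Suc q) + a = (n + a) + 1" "real (p + Suc q) + b + c = (n + b + c) + 1"
      by (simp_all add: n_def)
    have g1: "Gamma (real (p + Suc q) + a) = (n + a) * Gamma (n + a)"
      unfolding e1 using a n0 by (intro G1) simp
    have g2: "Gamma (real (p + Suc q) + b + c) = (n + b + c) * Gamma (n + b + c)"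
      unfolding e1 using b c n0 by (intro G1) simp
    show ?thesis unfolding Bw g1 g2 using a b c n0 Gna
      by (simp add: w_Suc[OF a b c] R_def W_def field_simps)
  qed
  have h3: "sqrt ((real q + a) * (real q + b)) = (real q + a) * s"
    unfolding s_def using a by (intro sq1) simp
  have h4: "sqrt ((real q + b) * (real q + c) / ((real q + a) * (real q + 1))) * sqrt ((real q + 1) * (real q + c)) = (real q + c) * s"
  proof -
    have "(real q + b) * (real q + c) / ((real q + a) * (real q + 1)) * ((real q + 1) * (real q + c))
       = (real q + c)^2 * ((real q + b) / (real q + a))"
    proof -
      have "real q + a \<noteq> 0" "real q + 1 \<noteq> 0" using a by (smt (verit) of_nat_0_le_iff)+ 
      then show ?thesis by (rule alg4)
    qed
    note E = this
    show ?thesis unfolding s_def real_sqrt_mult[symmetric] E using c by (intro sq2) simp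
  qed
  have h5: "Bmat (a+1) (b+1) c p q = R * (n + a) / (n + b + c) * (W * sp * s)"
  proof -
    have e1: "real (p + q) + (a + 1) = (n + a) + 1" "real (p + q) + (b + 1) + c = (n + b + c) + 1"
      by (simp_all add: n_def)
    have g1: "Gamma (real (p + q) + (a + 1)) = (n + a) * Gamma (n + a)"
      unfolding e1 using a n0 by (intro G1) simp
    have g2: "Gamma (real (p + q) + (b + 1) + c) = (n + b + c) * Gamma (n + b + c)"
      unfolding e1 using b c n0 by (intro G1) simp
    show ?thesis unfolding Bw g1 g2 w_shift[OF a b c] using a b c n0 Gna
      by (simp add: R_def W_def sp_def s_def field_simps)
  qed
  have h6: "sqrt ((real p + a) * (real p + b)) * sp = real p + b"
  proof -
    have "sqrt ((real p + a) * (real p + b)) = (real p + a) * sp"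
      unfolding sp_def using a by (intro sq1) simp
    moreover have "sp * sp = (real p + b) / (real p + a)" unfolding sp_def using a b
      by (simp add: real_sqrt_mult_self)
    ultimately show ?thesis using a
      by (metis (no_types, lifting) add_nonneg_pos mult.assoc nonzero_mult_div_cancel_left of_nat_0_le_iff order_less_irrefl times_divide_eq_right)
  qed
  have h7: "(if p = 0 then 0 else sqrt ((real (p-1) + 1) * (real (p-1) + c)) * Bmat (a+1) (b+1) c (p-1) q)
     = R * real p * (W * s)"
  proof (cases p)
    case 0 then show ?thesis by simp
  next
    case (Suc i)
    have e1: "real (i + q) + (a + 1) = n + a" "real (i + q) + (b + 1) + c = n + b + c"
      by (simp_all add: n_def Suc)
    have Bi: "Bmat (a+1) (b+1) c i q = R * (w a b c i * sqrt ((real i + b) / (real i + a)) * (w a b c q * s))"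
      unfolding Bw e1 w_shift[OF a b c] by (simp add: R_def s_def)
    have wp: "w a b c p = w a b c i * sqrt ((real i + b) * (real i + c) / ((real i + a) * (real i + 1)))"
      by (simp add: Suc w_Suc[OF a b c])
    have sq: "sqrt ((real i + 1) * (real i + c)) * sqrt ((real i + b) / (real i + a))
        = (real i + 1) * sqrt ((real i + b) * (real i + c) / ((real i + a) * (real i + 1)))"
    proof -
      have "(real i + 1) * (real i + c) * ((real i + b) / (real i + a)) = (real i + 1)^2 * ((real i + b) * (real i + c) / ((real i + a) * (real i + 1)))"
      proof -
        have "real i + a \<noteq> 0" "real i + 1 \<noteq> 0" using a by (smt (verit) of_nat_0_le_iff)+
        then show ?thesis by (rule alg5)
      qed
      note E = this
      show ?thesis unfolding real_sqrt_mult[symmetric] E by (intro sq2) simp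
    qed
    have "sqrt ((real (p-1) + 1) * (real (p-1) + c)) * Bmat (a+1) (b+1) c (p-1) q
        = R * (sqrt ((real i + 1) * (real i + c)) * sqrt ((real i + b) / (real i + a))) * w a b c i * (w a b c q * s)"
      by (simp add: Suc Bi)
    also have "\<dots> = R * real p * (W * s)" unfolding sq W_def wp by (simp add: Suc)
    finally show ?thesis using Suc by simp
  qed
  have alg: "(real q + a) - (n + a) * (real q + c) / (n + b + c) = (n + a) * (real p + b) / (n + b + c) - real p"
    using a b c n0 by (simp add: n_def field_simps)
  have "Bmat a b c p q * sqrt ((real q + a) * (real q + b)) - Bmat a b c p (Suc q) * sqrt ((real q + 1) * (real q + c))
      = R * W * s * ((real q + a) - (n + a) * (real q + c) / (n + b + c))"
  proof -
    have "Bmat a b c p (Suc q) * sqrt ((real q + 1) * (real q + c)) = R * (n + a) / (n + b + c) * W * ((real q + c) * s)"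
      unfolding h2 h4[symmetric] by simp
    then show ?thesis unfolding h1 h3 by (simp add: algebra_simps)
  qed
  also have "\<dots> = R * W * s * ((n + a) * (real p + b) / (n + b + c) - real p)" by (simp only: alg)
  also have "\<dots> = sqrt ((real p + a) * (real p + b)) * Bmat (a+1) (b+1) c p q - R * real p * (W * s)"
  proof -
    have "sqrt ((real p + a) * (real p + b)) * Bmat (a+1) (b+1) c p q = R * (n + a) / (n + b + c) * W * s * (sqrt ((real p + a) * (real p + b)) * sp)"
      unfolding h5 by simp
    then show ?thesis unfolding h6 by (simp add: algebra_simps)
  qed
  finally show ?thesis unfolding h7 .
qed

lemma AD: "smat_mult X (Dmat a b c) j k = (if k = 0 then 0 else X j (k-1) * dseq a b c (k-1)) - X j (k+1) * dseq a b c k"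
proof -
  have "smat_mult X (Dmat a b c) j k = (\<Sum>m\<in>{k-1, k+1}. X j m * Dmat a b c m k)"
    unfolding smat_mult_def by (rule suminf_finite) (auto simp: Dmat_def)
  then show ?thesis by (cases k) (auto simp: Dmat_def)
qed

lemma DA: "smat_mult (Dmat a b c) X j k = dseq a b c j * X (Suc j) k - (if j = 0 then 0 else dseq a b c (j-1) * X (j-1) k)"
proof -
  have "smat_mult (Dmat a b c) X j k = (\<Sum>m\<in>{j-1, j+1}. Dmat a b c j m * X m k)"
    unfolding smat_mult_def by (rule suminf_finite) (auto simp: Dmat_def)
  then show ?thesis by (cases j) (auto simp: Dmat_def)
qed

lemma A_par: "even j \<noteq> even m \<Longrightarrow> Amat a b c j m = 0"
  by (auto simp: Amat_def)

lemma A_ee: "Amat a b c (2*p) (2*q) = Bmat a b c p q" by (simp add: Amat_def)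
lemma A_oo: "Amat a b c (2*p+1) (2*q+1) = Bmat (a+1) (b+1) c p q" by (simp add: Amat_def)
lemma d_e: "dseq a b c (2*p) = sqrt ((real p + a) * (real p + b))" by (simp add: dseq_def)
lemma d_o: "dseq a b c (2*p+1) = sqrt ((real p + 1) * (real p + c))" by (simp add: dseq_def)

lemma Bsym: "Bmat a b c p q = Bmat a b c q p"
  by (simp add: Bw add.commute mult.commute)

theorem mainTheorem1:
  fixes a b c :: real
  assumes "a > 0" and "b > 0" and "c > 0"
  shows "smat_mult (Amat a b c) (Dmat a b c) = smat_mult (Dmat a b c) (Amat a b c)"
proof (intro ext)
  fix j k
  have K: "Bmat a b c p q * sqrt ((real q + a) * (real q + b)) - Bmat a b c p (Suc q) * sqrt ((real q + 1) * (real q + c))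
   = sqrt ((real p + a) * (real p + b)) * Bmat (a+1) (b+1) c p q
     - (if p = 0 then 0 else sqrt ((real (p-1) + 1) * (real (p-1) + c)) * Bmat (a+1) (b+1) c (p-1) q)" for p q
    by (rule key[OF assms])
  show "smat_mult (Amat a b c) (Dmat a b c) j k = smat_mult (Dmat a b c) (Amat a b c) j k"
  proof (cases "even j = even k")
    case True
    have z1: "k \<noteq> 0 \<Longrightarrow> Amat a b c j (k-1) = 0" using True by (intro A_par) (cases k, auto)
    have z2: "Amat a b c j (k+1) = 0" using True by (intro A_par) auto
    have z3: "Amat a b c (Suc j) k = 0" using True by (intro A_par) auto
    have z4: "j \<noteq> 0 \<Longrightarrow> Amat a b c (j-1) k = 0" using True by (intro A_par) (cases j, auto)
    have y1: "(if k = 0 then 0 else Amat a b c j (k-1) * dseq a b c (k-1)) = 0" using z1 by simp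
    have y4: "(if j = 0 then 0 else dseq a b c (j-1) * Amat a b c (j-1) k) = 0" using z4 by simp
    show ?thesis unfolding AD DA y1 y4 using z2 z3 by simp
  next
    case False
    show ?thesis
    proof (cases "even j")
      case True
      with False obtain p q where j: "j = 2*p" and k: "k = 2*q+1"
        by (metis evenE oddE)
      have e1: "k - 1 = 2*q" "k + 1 = 2*(Suc q)" "Suc j = 2*p+1" using j k by auto
      have "smat_mult (Amat a b c) (Dmat a b c) j k
          = Bmat a b c p q * sqrt ((real q + a) * (real q + b)) - Bmat a b c p (Suc q) * sqrt ((real q + 1) * (real q + c))"
        unfolding AD e1 j using k by (simp only: A_ee d_e d_o) simp
      also have "\<dots> = smat_mult (Dmat a b c) (Amat a b c) j k"
      proof (cases p)
        case 0 then show ?thesis unfolding K DA e1 j k by (simp add: Amat_def dseq_def)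
      next
        case (Suc i)
        have e2: "j - 1 = 2*i+1" using j Suc by simp
        show ?thesis unfolding K DA e1 e2 unfolding j k A_oo d_e d_o by (simp add: Suc)
      qed
      finally show ?thesis .
    next
      case oj: False
      with False obtain p q where j: "j = 2*p+1" and k: "k = 2*q"
        by (metis evenE oddE)
      have e1: "Suc j = 2*(Suc p)" "j - 1 = 2*p" "k + 1 = 2*q+1" using j k by auto
      have "smat_mult (Dmat a b c) (Amat a b c) j k
          = - (Bmat a b c q p * sqrt ((real p + a) * (real p + b)) - Bmat a b c q (Suc p) * sqrt ((real p + 1) * (real p + c)))"
        unfolding DA e1 unfolding j k A_ee d_e d_o A_oo by (simp add: Bsym[of a b c q])
      also have "\<dots> = smat_mult (Amat a b c) (Dmat a b c) j k"
      proof (cases q)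
        case 0 then show ?thesis unfolding K AD e1 j k by (simp add: Amat_def dseq_def Bsym[of "a+1" "b+1" c])
      next
        case (Suc i)
        have e2: "k - 1 = 2*i+1" using k Suc by simp
        show ?thesis unfolding K AD e1 e2 unfolding j k A_oo d_e d_o by (simp add: Suc Bsym[of "a+1" "b+1" c])
      qed
      finally show ?thesis by simp
    qed
  qed
qed

end
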